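(* Under Conditions 1 and 2, for every $\vartheta>0$ there exist constants $n_\vartheta\ge1$ and $\epsilon>0$ such that for all $n\ge n_\vartheta$ and all $u\in\mathbb R$ with $|u|\ge\vartheta$, $$\Big|1-\lambda^{(n)}m^{(n)}\int_0^\infty e^{\mathrm iut}\,\bar\Lambda^{(n)}_\beta(t)\,dt\Big|\ge\epsilon .$$
   Context: Notation: $\mathbb Z_+=\{1,2,\dots\}$, $\mathbb R_+=[0,\infty)$. For each $n\ge1$: $\lambda^{(n)}>0$; a probability $\Lambda^{(n)}$ on $\mathbb R_+$ with tail $\bar\Lambda^{(n)}(t)=\Lambda^{(n)}((t,\infty))$, $\eta^{(n)}=\int_0^\infty y\Lambda^{(n)}(dy)$, $\sigma^{(n)}=\frac12\int_0^\infty y^2\Lambda^{(n)}(dy)$ finite; probability laws $(p_k^{(n)})_{k\ge1}$, $(q_k^{(n)})_{k\ge1}$ on $\mathbb Z_+$ with generating functions $g^{(n)},h^{(n)}$, $m^{(n)}=\sum_kkp_k^{(n)}<\infty$; $\gamma_n>0$ with $\gamma_n\to\infty$, $\gamma_n/n\to\gamma_*\in[0,\infty)$. $\phi^{(n)}(z)=n\gamma_n[g^{(n)}(1-z/n)-(1-z/n)]$, $\psi^{(n)}(z)=\gamma_n[1-h^{(n)}(1-z/n)]$ for $z\in[0,n]$. Condition 1: (i) $\lambda^{(n)}\to\lambda>0$, $\eta^{(n)}\to\eta>0$, $\sigma^{(n)}\to\sigma>0$, $\gamma_n(1-\lambda^{(n)}\eta^{(n)})\to b\in\mathbb R$; (ii)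 $\psi^{(n)}\to\psi$ uniformly on compacts of $[0,\infty)$; (iii) $\{\phi^{(n)}\}$ is uniformly Lipschitz on bounded intervals and converges uniformly on compacts to a continuous $\phi$. Under Condition 1, $\lambda\eta=1$ and $m:=\lim_n\gamma_n(1-m^{(n)})$ exists (so $\gamma_n(1-\lambda^{(n)}\eta^{(n)}m^{(n)})\to b+m$). Condition 2 (for some $\alpha\in(1,2)$): (1) there are $C,k_0>0$ with $n\gamma_n\sum_{k\ge k_0}(k/n)^\alpha p^{(n)}_k+\sum_kk^\alpha q^{(n)}_k\le C$ for all $n$, and $\lim_{k_1\to\infty}\limsup_n\gamma_n\sum_{k\ge k_1}kp^{(n)}_k=0$; (2) there are $C_0>0$ and a probability $\Lambda^*$ on $\mathbb R_+$ with $\int t^{2\alpha}\Lambda^*(dt)<\infty$ and $\bar\Lambda^{(n)}\le C_0\bar\Lambda^*$ for all $n$. Fix $\beta\in[0,\infty)$ with $\beta>-(b+m)/(\sigma\lambda)$. Define $\bar\Lambda_\beta^{(n)}(t)=e^{-\beta t/\gamma_n}\bar\Lambda^{(n)}(t)$. *)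

theory Defs
  imports "HOL-Probability.Probability"
begin

definition tail :: "real measure \<Rightarrow> real \<Rightarrow> real" where
  "tail M t = measure M {t<..}"

definition prob_on_Rplus :: "real measure \<Rightarrow> bool" where
  "prob_on_Rplus M \<longleftrightarrow> prob_space M \<and> sets M = sets borel \<and> emeasure M {..<0} = 0"

definition prob_on_Zplus :: "(nat \<Rightarrow> real) \<Rightarrow> bool" where
  "prob_on_Zplus p \<longleftrightarrow> (\<forall>k. p k \<ge> 0) \<and> p 0 = 0 \<and> p sums 1"

definition pgf :: "(nat \<Rightarrow> real) \<Rightarrow> real \<Rightarrow> real" where
  "pgf p s = (\<Sum>k. p k * s ^ k)"

definition mean_Z :: "(nat \<Rightarrow> real) \<Rightarrow> real" where
  "mean_Z p = (\<Sum>k. real k * p k)"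

definition phi_n :: "(nat \<Rightarrow> real) \<Rightarrow> real \<Rightarrow> nat \<Rightarrow> real \<Rightarrow> real" where
  "phi_n p g n z = real n * g * (pgf p (1 - z / real n) - (1 - z / real n))"

definition psi_n :: "(nat \<Rightarrow> real) \<Rightarrow> real \<Rightarrow> nat \<Rightarrow> real \<Rightarrow> real" where
  "psi_n q g n z = g * (1 - pgf q (1 - z / real n))"

end

theory Submission
  imports Defs
begin

lemma tail_antimono:
  assumes "prob_on_Rplus M" "t \<le> s"
  shows "tail M s \<le> tail M t"
proof -
  interpret prob_space M using assms(1) by (simp add: prob_on_Rplus_def)
  have "sets M = sets borel" using assms(1) by (simp add: prob_on_Rplus_def)
  then show ?thesis unfolding tail_def
    using assms(2) by (intro finite_measure_mono) auto
qed

lemma tail_nonneg: "tail M t \<ge> 0" by (simp add: tail_def)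

lemma tail_measurable:
  assumes "prob_on_Rplus M"
  shows "tail M \<in> borel_measurable borel"
proof -
  have "mono (\<lambda>t. - tail M t)"
    by (auto simp: mono_def intro!: tail_antimono[OF assms])
  then have "(\<lambda>t. - (- tail M t)) \<in> borel_measurable borel"
    by (intro borel_measurable_uminus borel_measurable_mono)
  then show ?thesis by simp
qed

lemma tail_nn_integral:
  assumes "prob_on_Rplus M"
  shows "(\<integral>\<^sup>+t. indicator {0..} t * ennreal (tail M t) \<partial>lborel) = (\<integral>\<^sup>+x. ennreal x \<partial>M)"
proof -
  interpret prob_space M using assms(1) by (simp add: prob_on_Rplus_def)
  have sM: "sets M = sets borel" using assms(1) by (simp add: prob_on_Rplus_def)
  interpret pair_sigma_finite lborel M
    by (simp add: pair_sigma_finite_def lborel.sigma_finite_measure_axioms sigma_finite_measure_axioms)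
  have meas: "(\<lambda>(t::real,x::real). indicator {0..} t * indicator {t<..} x :: ennreal) \<in> borel_measurable (lborel \<Otimes>\<^sub>M M)"
  proof -
    have "(\<lambda>(t::real,x::real). indicator {0..} t * indicator {t<..} x :: ennreal) \<in> borel_measurable (borel \<Otimes>\<^sub>M borel)"
    proof -
      have "(\<lambda>(t::real,x::real). indicator {0..} t * (if t < x then 1 else 0) :: ennreal) \<in> borel_measurable (borel \<Otimes>\<^sub>M borel)"
        by measurable
      moreover have "(\<lambda>(t::real,x::real). indicator {0..} t * (if t < x then 1 else 0) :: ennreal) = (\<lambda>(t::real,x::real). indicator {0..} t * indicator {t<..} x :: ennreal)"
        by (auto simp: fun_eq_iff indicator_def)
      ultimately show ?thesis by simp
    qed
    then show ?thesis
      by (subst measurable_cong_sets[OF sets_pair_measure_cong[OF sets_lborel sM] refl]) 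
  qed
  have "(\<integral>\<^sup>+t. indicator {0..} t * ennreal (tail M t) \<partial>lborel)
      = (\<integral>\<^sup>+t. (\<integral>\<^sup>+x. indicator {0..} t * indicator {t<..} x \<partial>M) \<partial>lborel)"
  proof (intro nn_integral_cong)
    fix t :: real
    have "{t<..} \<in> sets M" using sM by simp
    then show "indicator {0..} t * ennreal (tail M t) = (\<integral>\<^sup>+x. indicator {0..} t * indicator {t<..} x \<partial>M)"
      by (simp add: nn_integral_cmult tail_def emeasure_eq_measure)
  qed
  also have "\<dots> = (\<integral>\<^sup>+x. (\<integral>\<^sup>+t. indicator {0..} t * indicator {t<..} x \<partial>lborel) \<partial>M)"
    using Fubini'[OF meas] by simp
  also have "\<dots> = (\<integral>\<^sup>+x. ennreal x \<partial>M)"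
  proof (intro nn_integral_cong)
    fix x :: real
    have "(\<lambda>t. indicator {0..} t * indicator {t<..} x :: ennreal) = indicator {0..<x}"
      by (auto simp: indicator_def fun_eq_iff)
    moreover have "emeasure lborel {0..<x} = ennreal x"
      by (cases "0 \<le> x") (auto simp: ennreal_neg)
    ultimately show "(\<integral>\<^sup>+t. indicator {0..} t * indicator {t<..} x \<partial>lborel) = ennreal x"
      by simp
  qed
  finally show ?thesis .
qed

lemma tail_set_integral:
  assumes P: "prob_on_Rplus M" and I: "integrable M (\<lambda>x. x)"
  shows "set_integrable lborel {0..} (tail M)"
    "(LINT t:{0..}|lborel. tail M t) = (\<integral>x. x \<partial>M)"
proof -
  interpret prob_space M using P by (simp add: prob_on_Rplus_def)
  have sM: "sets M = sets borel" and z: "emeasure M {..<0} = 0" using P by (auto simp: prob_on_Rplus_def)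
  have AE: "AE x in M. 0 \<le> x"
    by (rule AE_I[of _ _ "{..<0}"]) (auto simp: z sM)
  have e: "(\<integral>\<^sup>+x. ennreal x \<partial>M) = ennreal (\<integral>x. x \<partial>M)"
    by (rule nn_integral_eq_integral[OF I AE])
  have nn: "0 \<le> (\<integral>x. x \<partial>M)" using AE by (rule integral_nonneg_AE)
  have hb: "has_bochner_integral lborel (\<lambda>t. indicator {0..} t *\<^sub>R tail M t) (\<integral>x. x \<partial>M)"
  proof (rule has_bochner_integral_nn_integral)
    show "(\<lambda>t. indicator {0..} t *\<^sub>R tail M t) \<in> borel_measurable lborel"
      using tail_measurable[OF P] by measurable
    show "AE x in lborel. 0 \<le> indicator {0..} x *\<^sub>R tail M x" by (simp add: tail_nonneg)
    show "0 \<le> (\<integral>x. x \<partial>M)" by (rule nn)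
    have "(\<integral>\<^sup>+ x. ennreal (indicator {0..} x *\<^sub>R tail M x) \<partial>lborel)
        = (\<integral>\<^sup>+t. indicator {0..} t * ennreal (tail M t) \<partial>lborel)"
      by (intro nn_integral_cong) (auto simp: indicator_def)
    also have "\<dots> = ennreal (\<integral>x. x \<partial>M)" using tail_nn_integral[OF P] e by simp
    finally show "(\<integral>\<^sup>+ x. ennreal (indicator {0..} x *\<^sub>R tail M x) \<partial>lborel) = ennreal (\<integral>x. x \<partial>M)" .
  qed
  have "integrable lborel (\<lambda>t. indicator {0..} t *\<^sub>R tail M t)" using hb by (auto simp: integrable.simps)
  then show "set_integrable lborel {0..} (tail M)" by (simp add: set_integrable_def)
  have "integral\<^sup>L lborel (\<lambda>t. indicator {0..} t *\<^sub>R tail M t) = (\<integral>x. x \<partial>M)" using hb by (rule has_bochner_integral_integral_eq)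
  then show "(LINT t:{0..}|lborel. tail M t) = (\<integral>x. x \<partial>M)" by (simp add: set_lebesgue_integral_def)
qed

lemma tail_lower:
  assumes P: "prob_on_Rplus M" and I: "integrable M (\<lambda>x. x)" and I2: "integrable M (\<lambda>x. x\<^sup>2)"
    and a: "a > 0" and B: "B > 0"
  shows "(\<integral>x. x \<partial>M) \<le> a + B * tail M a + (\<integral>x. x\<^sup>2 \<partial>M) / B"
proof -
  interpret prob_space M using P by (simp add: prob_on_Rplus_def)
  have sM: "sets M = sets borel" using P by (auto simp: prob_on_Rplus_def)
  have A: "{a<..} \<in> sets M" using sM by simp
  have pt: "x \<le> a + B * indicator {a<..} x + x\<^sup>2 / B" for x :: real
  proof (cases "x \<le> a")
    case True then show ?thesis using B by (simp add: indicator_def) (smt (verit) divide_nonneg_pos zero_le_power2)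
  next
    case False
    show ?thesis
    proof (cases "x \<le> B")
      case True then show ?thesis using False B a by (simp add: indicator_def) (smt (verit) divide_nonneg_pos zero_le_power2)
    next
      case F2: False
      have "x * B \<le> x\<^sup>2" using F2 B by (simp add: power2_eq_square mult_left_mono)
      then have "x \<le> x\<^sup>2 / B" using B by (simp add: pos_le_divide_eq)
      then show ?thesis using a B False by (simp add: indicator_def)
    qed
  qed
  have i1: "integrable M (\<lambda>x. B * indicator {a<..} x :: real)"
    using A by (intro integrable_mult_right integrable_real_indicator A) (simp add: less_top[symmetric])
  have i2: "integrable M (\<lambda>x. a + B * indicator {a<..} x + x\<^sup>2 / B)"
    using i1 I2 by (intro Bochner_Integration.integrable_add integrable_divide) auto
  have "(\<integral>x. x \<partial>M) \<le> (\<integral>x. a + B * indicator {a<..} x + x\<^sup>2 / B \<partial>M)"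
    by (intro integral_mono I pt i2)
  also have "\<dots> = a + B * tail M a + (\<integral>x. x\<^sup>2 \<partial>M) / B"
    using A i1 I2 by (simp add: integral_add tail_def prob_space)
  finally show ?thesis .
qed

lemma cos_integral:
  fixes u a :: real
  assumes "u \<noteq> 0" "0 \<le> a"
  shows "(LINT t:{0..a}|lborel. 1 - cos (u * t)) = a - sin (u * a) / u"
proof -
  have "(LINT t:{0..a}|lborel. 1 - cos (u * t)) = (a - sin (u * a) / u) - (0 - sin (u * 0) / u)"
    unfolding set_lebesgue_integral_def
  proof (rule integral_FTC_atLeastAtMost[OF assms(2)])
    fix x :: real
    show "((\<lambda>t. t - sin (u * t) / u) has_vector_derivative 1 - cos (u * x)) (at x within {0..a})"
      unfolding has_real_derivative_iff_has_vector_derivative[symmetric]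
      using assms(1) by (auto intro!: derivative_eq_intros)
    show "continuous_on {0..a} (\<lambda>t. 1 - cos (u * t))" by (intro continuous_intros)
  qed
  then show ?thesis by simp
qed

lemma sinc_bound:
  fixes x y0 :: real
  assumes y0: "0 < y0" "y0 \<le> 2" and x: "y0 \<le> x"
  shows "min (1/2) ((y0 - sin y0)/2) \<le> 1 - sin x / x" and "0 < y0 - sin y0"
proof -
  have pos: "0 - sin 0 < y0 - sin y0"
  proof (rule DERIV_pos_imp_increasing_open[OF y0(1)])
    show "continuous_on {0..y0} (\<lambda>t. t - sin t)" by (intro continuous_intros)
    fix t :: real assume t: "0 < t" "t < y0"
    show "\<exists>y. ((\<lambda>t. t - sin t) has_real_derivative y) (at t) \<and> 0 < y"
    proof -
      have "cos t < cos 0" using t y0 pi_gt3 by (intro cos_monotone_0_pi) auto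
      then show ?thesis by (auto intro!: derivative_eq_intros exI[of _ "1 - cos t"])
    qed
  qed
  then show "0 < y0 - sin y0" by simp
  show "min (1/2) ((y0 - sin y0)/2) \<le> 1 - sin x / x"
  proof (cases "x \<ge> 2")
    case True
    have "sin x \<le> 1" by simp
    also have "1 \<le> x / 2" using True by simp
    finally have "sin x / x \<le> 1/2" using True by (simp add: divide_le_eq)
    then show ?thesis by simp
  next
    case False
    have "y0 - sin y0 \<le> x - sin x"
    proof (rule DERIV_nonneg_imp_nondecreasing[OF x])
      fix t :: real
      show "\<exists>y. ((\<lambda>t. t - sin t) has_real_derivative y) (at t) \<and> 0 \<le> y"
        by (auto intro!: derivative_eq_intros exI[of _ "1 - cos t"])
    qed
    moreover have "0 \<le> x - sin x" using sin_x_le_x[of x] x y0 by simp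
    ultimately have h1: "(y0 - sin y0)*x \<le> (x - sin x)*x"
      using False x y0 by (auto intro!: mult_right_mono)
    have h2: "(x - sin x)*x \<le> (x - sin x)*2"
      using \<open>0 \<le> x - sin x\<close> False by (intro mult_left_mono) auto
    have h3: "(y0 - sin y0)*x \<le> (x - sin x)*2" using h1 h2 by linarith
    have "(y0 - sin y0)/2 \<le> (x - sin x) / x"
      using h3 False x y0 by (simp add: divide_simps)
    also have "\<dots> = 1 - sin x / x" using x y0 by (simp add: diff_divide_distrib)
    finally show ?thesis by (rule min.coboundedI2)
  qed
qed


lemma bern2:
  fixes s :: real
  assumes "0 \<le> s" "s \<le> 1"
  shows "(1 - s)^k \<le> 1 - real k * s + (real k)^2 * s^2"
proof (induction k)
  case 0 then show ?case by simp
next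
  case (Suc k)
  have "(1 - s)^(Suc k) = (1 - s) * (1 - s)^k" by simp
  also have "\<dots> \<le> (1 - s) * (1 - real k * s + (real k)^2 * s^2)"
    using Suc assms by (intro mult_left_mono) auto
  also have "\<dots> \<le> 1 - real (Suc k) * s + (real (Suc k))^2 * s^2"
  proof -
    have "0 \<le> (real k)^2 * s^3 + real k * s^2 + s^2" using assms by simp
    then show ?thesis by (simp add: algebra_simps power2_eq_square power3_eq_cube)
  qed
  finally show ?case .
qed

lemma mean_lower:
  assumes P: "prob_on_Zplus p" and S: "summable (\<lambda>k. real k * p k)"
  shows "1 \<le> mean_Z p"
proof -
  have p0: "\<And>k. p k \<ge> 0" and pz: "p 0 = 0" and ps: "p sums 1" using P by (auto simp: prob_on_Zplus_def)
  have "suminf p \<le> (\<Sum>k. real k * p k)"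
  proof (rule suminf_le)
    fix k show "p k \<le> real k * p k"
      using p0[of k] pz by (cases k) (auto simp: algebra_simps)
  qed (use ps S in \<open>auto simp: sums_iff\<close>)
  then show ?thesis using ps by (simp add: mean_Z_def sums_iff)
qed

lemma mean_upper:
  fixes p :: "nat \<Rightarrow> real" and g L :: real and n :: nat
  assumes P: "prob_on_Zplus p" and S: "summable (\<lambda>k. real k * p k)" and n: "n \<ge> 1" and g: "g > 0"
  and Lip: "\<forall>z1\<in>{0..1}. \<forall>z2\<in>{0..1}. z1 \<le> real n \<longrightarrow> z2 \<le> real n \<longrightarrow>
              \<bar>phi_n p g n z1 - phi_n p g n z2\<bar> \<le> L * \<bar>z1 - z2\<bar>"
  shows "mean_Z p \<le> 1 + L / g"
proof -
  have p0: "\<And>k. p k \<ge> 0" and ps: "p sums 1" using P by (auto simp: prob_on_Zplus_def)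
  have sp: "summable p" and sp1: "suminf p = 1" using ps by (auto simp: sums_iff)
  have sumG: "summable (\<lambda>k. p k * (1 - s)^k)" if "0 \<le> s" "s \<le> 1" for s :: real
  proof (rule summable_comparison_test[OF _ sp])
    have "norm (p k * (1 - s)^k) \<le> p k" for k
      using p0[of k] that by (auto simp: abs_mult intro!: mult_left_le power_le_one)
    then show "\<exists>N. \<forall>k\<ge>N. norm (p k * (1 - s)^k) \<le> p k" by blast
  qed
  have G1: "pgf p 1 = 1" using sp1 by (simp add: pgf_def)
  define C where "C = 1 + L / g"
  have key: "1 - pgf p (1 - s) \<le> s * C" if s: "0 < s" "s \<le> 1 / real n" for s :: real
  proof -
    define z where "z = s * real n"
    have nn: "real n \<ge> 1" using n by simp
    have "1 / real n \<le> 1" using nn by simp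
    then have s1: "s \<le> 1" using s by linarith
    have z1: "z \<le> 1" using s nn by (auto simp: z_def field_simps)
    have z0: "0 \<le> z" using s nn by (simp add: z_def)
    have z: "0 \<le> z" "z \<le> 1" "z \<le> real n" using z0 z1 nn by linarith+
    have zs: "z / real n = s" using nn by (simp add: z_def)
    have "\<bar>phi_n p g n z - phi_n p g n 0\<bar> \<le> L * \<bar>z - 0\<bar>"
      using Lip z nn by (metis atLeastAtMost_iff order_refl zero_le_one of_nat_0_le_iff)
    moreover have e0: "phi_n p g n 0 = 0" using G1 by (simp add: phi_n_def)
    ultimately have b: "\<bar>phi_n p g n z\<bar> \<le> L * z" using z by simp
    have e1: "phi_n p g n z = real n * g * (pgf p (1 - s) - (1 - s))" by (simp add: phi_n_def zs)
    have "- phi_n p g n z \<le> L * z" using b abs_ge_minus_self[of "phi_n p g n z"] by linarith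
    then have "- (real n * g * (pgf p (1 - s) - (1 - s))) \<le> L * z"
      unfolding e1 .
    then have "- (real n * g * (pgf p (1 - s) - (1 - s))) \<le> L * (s * real n)"
      unfolding z_def .
    then have "real n * g * (1 - pgf p (1 - s) - s) \<le> real n * g * (L * s / g)"
      using g by (simp add: algebra_simps)
    then have "1 - pgf p (1 - s) - s \<le> L * s / g"
      using g nn by (simp add: mult_le_cancel_left_pos pos_le_divide_eq mult.commute)
    then show ?thesis by (simp add: C_def algebra_simps)
  qed
  have partial: "(\<Sum>k<K. real k * p k) \<le> C" for K
  proof (rule ccontr)
    assume "\<not> ?thesis"
    then have A: "(\<Sum>k<K. real k * p k) > C" by simp
    define A where "A = (\<Sum>k<K. real k * p k)"
    define Q where "Q = (\<Sum>k<K. (real k)^2 * p k)"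
    have Q0: "Q \<ge> 0" unfolding Q_def using p0 by (intro sum_nonneg) auto
    define s where "s = min (1 / real n) ((A - C) / (2 * (Q + 1)))"
    have s: "0 < s" "s \<le> 1 / real n" "s \<le> (A - C) / (2 * (Q + 1))" using A n Q0
      by (auto simp: s_def A_def)
    have s1: "s \<le> 1" using s(2) n
      by (smt (verit) divide_le_eq_1 of_nat_1 of_nat_mono)
    have "(\<Sum>k<K. p k * (real k * s - (real k)^2 * s^2)) \<le> (\<Sum>k<K. p k * (1 - (1 - s)^k))"
      using bern2[OF _ s1] s p0 by (intro sum_mono mult_left_mono) (auto simp: algebra_simps)
    also have "\<dots> \<le> (\<Sum>k. p k * (1 - (1 - s)^k))"
    proof (rule sum_le_suminf)
      show "summable (\<lambda>k. p k * (1 - (1 - s)^k))"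
        using summable_diff[OF sp sumG[of s]] s s1 by (simp add: algebra_simps)
      show "0 \<le> p k * (1 - (1 - s)^k)" if "k \<in> - {..<K}" for k
        using p0 s s1 by (auto intro!: mult_nonneg_nonneg power_le_one)
    qed simp
    also have "\<dots> = 1 - pgf p (1 - s)"
      using suminf_diff[OF sp sumG[of s]] s s1 sp1 by (simp add: pgf_def algebra_simps)
    also have "\<dots> \<le> s * C" using key s by simp
    finally have "s * A - s^2 * Q \<le> s * C"
      by (simp add: A_def Q_def sum_distrib_left sum_subtractf algebra_simps power2_eq_square)
    then have "s * (A - s * Q) \<le> s * C" by (simp add: algebra_simps power2_eq_square)
    then have "A - s * Q \<le> C" using s by simp
    moreover have "s * Q \<le> (A - C) / 2"
    proof -
      have "s * Q \<le> (A - C) / (2 * (Q + 1)) * (Q + 1)"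
        using s Q0 by (intro mult_mono) auto
      also have "\<dots> = (A - C) / 2" using Q0 by (simp add: field_simps)
      finally show ?thesis .
    qed
    moreover have "A > C" using A by (simp add: A_def)
    ultimately show False by (simp add: field_simps)
  qed
  show ?thesis unfolding mean_Z_def C_def[symmetric]
    by (rule suminf_le_const[OF S partial])
qed


theorem proposition5p10:
  fixes lam :: "nat \<Rightarrow> real" and Lam :: "nat \<Rightarrow> real measure"
    and p q :: "nat \<Rightarrow> nat \<Rightarrow> real" and gam :: "nat \<Rightarrow> real"
    and gam_star lam0 eta0 sig0 b \<alpha> \<beta> :: real
    and \<psi> \<phi> :: "real \<Rightarrow> real"
  defines "eta \<equiv> (\<lambda>n. \<integral>y. y \<partial>(Lam n))"
      and "sig \<equiv> (\<lambda>n. (1/2) * (\<integral>y. y\<^sup>2 \<partial>(Lam n)))"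
      and "mm \<equiv> (\<lambda>n. mean_Z (p n))"
  assumes \<comment> \<open>standing assumptions\<close>
    lam_pos: "\<forall>n\<ge>1. lam n > 0"
    and Lam_prob: "\<forall>n\<ge>1. prob_on_Rplus (Lam n)"
    and Lam_mom: "\<forall>n\<ge>1. integrable (Lam n) (\<lambda>y. y) \<and> integrable (Lam n) (\<lambda>y. y\<^sup>2)"
    and p_prob: "\<forall>n\<ge>1. prob_on_Zplus (p n)"
    and q_prob: "\<forall>n\<ge>1. prob_on_Zplus (q n)"
    and p_mean: "\<forall>n\<ge>1. summable (\<lambda>k. real k * p n k)"
    and gam_pos: "\<forall>n\<ge>1. gam n > 0"
    and gam_inf: "filterlim gam at_top sequentially"
    and gam_star: "gam_star \<ge> 0" "(\<lambda>n. gam n / real n) \<longlonglongrightarrow> gam_star"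
    \<comment> \<open>Condition 1 (i)\<close>
    and C1_lam: "lam \<longlonglongrightarrow> lam0" "lam0 > 0"
    and C1_eta: "eta \<longlonglongrightarrow> eta0" "eta0 > 0"
    and C1_sig: "sig \<longlonglongrightarrow> sig0" "sig0 > 0"
    and C1_b: "(\<lambda>n. gam n * (1 - lam n * eta n)) \<longlonglongrightarrow> b"
    \<comment> \<open>Condition 1 (ii): uniform convergence on compacts of [0,\<infinity>)\<close>
    and C1_psi: "\<forall>K>0. \<forall>e>0. \<forall>\<^sub>F n in sequentially.
                   \<forall>z\<in>{0..K}. \<bar>psi_n (q n) (gam n) n z - \<psi> z\<bar> < e"
    \<comment> \<open>Condition 1 (iii)\<close>
    and C1_phi_lip: "\<forall>K>0. \<exists>L. \<forall>n\<ge>1. \<forall>z1\<in>{0..K}. \<forall>z2\<in>{0..K}.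
                   z1 \<le> real n \<longrightarrow> z2 \<le> real n \<longrightarrow>
                   \<bar>phi_n (p n) (gam n) n z1 - phi_n (p n) (gam n) n z2\<bar> \<le> L * \<bar>z1 - z2\<bar>"
    and C1_phi_conv: "\<forall>K>0. \<forall>e>0. \<forall>\<^sub>F n in sequentially.
                   \<forall>z\<in>{0..K}. \<bar>phi_n (p n) (gam n) n z - \<phi> z\<bar> < e"
    and C1_phi_cont: "continuous_on {0..} \<phi>"
    \<comment> \<open>Condition 2\<close>
    and C2_alpha: "1 < \<alpha>" "\<alpha> < 2"
    and C2_1a: "\<exists>C>0. \<exists>k0>0. \<forall>n\<ge>1.
                 summable (\<lambda>k. if real k \<ge> k0 then (real k / real n) powr \<alpha> * p n k else 0)
               \<and> summable (\<lambda>k. real k powr \<alpha> * q n k)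
               \<and> real n * gam n * (\<Sum>k. if real k \<ge> k0 then (real k / real n) powr \<alpha> * p n k else 0)
                   + (\<Sum>k. real k powr \<alpha> * q n k) \<le> C"
    and C2_1b: "(\<lambda>k1. limsup (\<lambda>n. ereal (gam n * (\<Sum>k. if k \<ge> k1 then real k * p n k else 0))))
                 \<longlonglongrightarrow> 0"
    and C2_2: "\<exists>C0>0. \<exists>LamS. prob_on_Rplus LamS \<and> integrable LamS (\<lambda>t. t powr (2 * \<alpha>))
                 \<and> (\<forall>n\<ge>1. \<forall>t\<ge>0. tail (Lam n) t \<le> C0 * tail LamS t)"
    \<comment> \<open>choice of beta, with m = lim gam n * (1 - m(n))\<close>
    and beta: "\<beta> \<ge> 0"
              "\<beta> > - (b + lim (\<lambda>n. gam n * (1 - mm n))) / (sig0 * lam0)"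
  shows "\<forall>\<theta>>0. \<exists>n_theta\<ge>1. \<exists>\<epsilon>>0. \<forall>n\<ge>n_theta. \<forall>u::real. \<bar>u\<bar> \<ge> \<theta> \<longrightarrow>
           cmod (1 - complex_of_real (lam n * mm n) *
              set_lebesgue_integral lborel {0..}
                (\<lambda>t. exp (\<i> * complex_of_real (u * t)) *
                     complex_of_real (exp (- \<beta> * t / gam n) * tail (Lam n) t))) \<ge> \<epsilon>"
proof (intro allI impI)
  fix \<theta> :: real assume th: "\<theta> > 0"
  obtain L where L: "\<forall>n\<ge>1. \<forall>z1\<in>{0..1}. \<forall>z2\<in>{0..1}. z1 \<le> real n \<longrightarrow> z2 \<le> real n \<longrightarrow>
      \<bar>phi_n (p n) (gam n) n z1 - phi_n (p n) (gam n) n z2\<bar> \<le> L * \<bar>z1 - z2\<bar>"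
    using C1_phi_lip[rule_format, of 1] by auto
  define a where "a = eta0 / 4"
  define B where "B = 16 * sig0 / eta0"
  define c0 where "c0 = eta0 / (4 * B)"
  define c1 where "c1 = exp (- \<beta> * a) * c0"
  define y0 where "y0 = min (\<theta> * a) 2"
  define d2 where "d2 = min (1/2) ((y0 - sin y0)/2)"
  define D where "D = lam0 / 2 * (c1 * (a * d2))"
  define eps where "eps = D / 2"
  have a0: "a > 0" using C1_eta by (simp add: a_def)
  have B0: "B > 0" using C1_eta C1_sig by (simp add: B_def)
  have c00: "c0 > 0" using C1_eta B0 by (simp add: c0_def)
  have c10: "c1 > 0" using c00 by (simp add: c1_def)
  have y00: "y0 > 0" "y0 \<le> 2" using th a0 by (auto simp: y0_def)
  have d20: "d2 > 0" using sinc_bound(2)[OF y00 order_refl] by (simp add: d2_def)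
  have D0: "D > 0" using C1_lam c10 a0 d20 by (simp add: D_def)
  have eps0: "eps > 0" using D0 by (simp add: eps_def)
  have lim_le: "(\<lambda>n. lam n * eta n * (1 + L / gam n)) \<longlonglongrightarrow> 1"
  proof -
    have ginv: "(\<lambda>n. inverse (gam n)) \<longlonglongrightarrow> 0" using gam_inf by (rule tendsto_inverse_0_at_top)
    have "(\<lambda>n. gam n * (1 - lam n * eta n) * inverse (gam n)) \<longlonglongrightarrow> b * 0"
      by (intro tendsto_mult C1_b ginv)
    moreover have "eventually (\<lambda>n. gam n * (1 - lam n * eta n) * inverse (gam n) = 1 - lam n * eta n) sequentially"
      using eventually_ge_at_top[of 1] by eventually_elim (use gam_pos in auto)
    ultimately have "(\<lambda>n. 1 - lam n * eta n) \<longlonglongrightarrow> 0"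
      by (simp add: tendsto_cong)
    then have "(\<lambda>n. 1 - (1 - lam n * eta n)) \<longlonglongrightarrow> 1 - 0" by (intro tendsto_diff tendsto_const)
    then have le: "(\<lambda>n. lam n * eta n) \<longlonglongrightarrow> 1" by simp
    have "(\<lambda>n. 1 + L * inverse (gam n)) \<longlonglongrightarrow> 1 + L * 0" by (intro tendsto_intros ginv)
    then have "(\<lambda>n. lam n * eta n * (1 + L * inverse (gam n))) \<longlonglongrightarrow> 1 * (1 + L * 0)"
      using le by (intro tendsto_mult)
    then show ?thesis by (simp add: divide_inverse)
  qed
  have "eventually (\<lambda>n. n \<ge> 1 \<and> lam n > lam0 / 2 \<and> eta n > 3 * eta0/4 \<and> sig n < 2 * sig0 \<and> gam n > 1
          \<and> lam n * eta n * (1 + L / gam n) < 1 + eps) sequentially"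
  proof -
    have e1: "eventually (\<lambda>n. lam n > lam0 / 2) sequentially"
      by (rule order_tendstoD(1)[OF C1_lam(1)]) (use C1_lam(2) in simp)
    have e2: "eventually (\<lambda>n. eta n > 3 * eta0 / 4) sequentially"
      by (rule order_tendstoD(1)[OF C1_eta(1)]) (use C1_eta(2) in simp)
    have e3: "eventually (\<lambda>n. sig n < 2 * sig0) sequentially"
      by (rule order_tendstoD(2)[OF C1_sig(1)]) (use C1_sig(2) in simp)
    have e4: "eventually (\<lambda>n. gam n > 1) sequentially"
      using filterlim_at_top_dense gam_inf by blast
    have e5: "eventually (\<lambda>n. lam n * eta n * (1 + L / gam n) < 1 + eps) sequentially"
      by (rule order_tendstoD(2)[OF lim_le]) (use eps0 in simp)
    show ?thesis using eventually_ge_at_top[of 1] e1 e2 e3 e4 e5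
      by eventually_elim auto
  qed
  then obtain N where N: "\<And>n. n \<ge> N \<Longrightarrow> n \<ge> 1 \<and> lam n > lam0 / 2 \<and> eta n > 3 * eta0/4 \<and> sig n < 2 * sig0 \<and> gam n > 1
          \<and> lam n * eta n * (1 + L / gam n) < 1 + eps"
    by (auto simp: eventually_sequentially)
  show "\<exists>n_theta\<ge>1. \<exists>\<epsilon>>0. \<forall>n\<ge>n_theta. \<forall>u::real. \<bar>u\<bar> \<ge> \<theta> \<longrightarrow>
           cmod (1 - complex_of_real (lam n * mm n) *
              set_lebesgue_integral lborel {0..}
                (\<lambda>t. exp (\<i> * complex_of_real (u * t)) *
                     complex_of_real (exp (- \<beta> * t / gam n) * tail (Lam n) t))) \<ge> \<epsilon>"
  proof (intro exI[of _ "max N 1"] conjI exI[of _ eps] allI impI)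
    show "max N 1 \<ge> 1" by simp
    show "eps > 0" by (rule eps0)
    fix n :: nat and u :: real
    assume n: "max N 1 \<le> n" and u: "\<theta> \<le> \<bar>u\<bar>"
    have Nn: "n \<ge> 1" "lam n > lam0 / 2" "eta n > 3 * eta0/4" "sig n < 2 * sig0" "gam n > 1"
          "lam n * eta n * (1 + L / gam n) < 1 + eps" using N[of n] n by auto
    have P: "prob_on_Rplus (Lam n)" and I1: "integrable (Lam n) (\<lambda>y. y)" and I2: "integrable (Lam n) (\<lambda>y. y\<^sup>2)"
      using Lam_prob Lam_mom Nn(1) by auto
    have TS: "set_integrable lborel {0..} (tail (Lam n))" "(LINT t:{0..}|lborel. tail (Lam n) t) = eta n"
      using tail_set_integral[OF P I1] by (auto simp: eta_def)
    have TL: "eta n \<le> a + B * tail (Lam n) a + (2 * sig n) / B"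
      using tail_lower[OF P I1 I2 a0 B0] by (simp add: eta_def sig_def)
    have "(2 * sig n) / B \<le> (4 * sig0) / B" using Nn(4) B0 by (intro divide_right_mono) auto
    also have "(4 * sig0) / B = eta0 / 4" using C1_sig C1_eta by (simp add: B_def field_simps)
    finally have "B * tail (Lam n) a \<ge> eta0 / 4" using TL Nn(3) by (simp add: a_def)
    then have tail_a: "tail (Lam n) a \<ge> c0" using B0 by (simp add: c0_def pos_divide_le_eq algebra_simps)
    define G where "G = (\<lambda>t. exp (- \<beta> * t / gam n) * tail (Lam n) t)"
    have Gmeas: "G \<in> borel_measurable lborel"
      unfolding G_def using tail_measurable[OF P] by measurable
    have G0: "G t \<ge> 0" for t by (simp add: G_def tail_nonneg)
    have Gle: "G t \<le> tail (Lam n) t" if "t \<ge> 0" for t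
    proof -
      have "exp (- \<beta> * t / gam n) \<le> 1" using that beta(1) Nn(5) by (simp add: divide_nonneg_pos)
      then show ?thesis unfolding G_def using tail_nonneg[of "Lam n" t]
        by (simp add: mult_left_le_one_le)
    qed
    have Ga: "G t \<ge> c1" if "0 \<le> t" "t \<le> a" for t
    proof -
      have "\<beta> * t / gam n \<le> \<beta> * t" using beta(1) that Nn(5)
        by (simp add: divide_le_eq mult_le_cancel_left1 mult_nonneg_nonneg not_less)
      also have "\<beta> * t \<le> \<beta> * a" using beta(1) that by (simp add: mult_left_mono)
      finally have "exp (- \<beta> * a) \<le> exp (- \<beta> * t / gam n)" by simp
      moreover have "c0 \<le> tail (Lam n) t" using tail_a tail_antimono[OF P that(2)] by simp
      ultimately show ?thesis unfolding G_def c1_def using c00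
        by (intro mult_mono) auto
    qed
    have iT: "integrable lborel (\<lambda>t. indicator {0..} t * tail (Lam n) t)"
      using TS(1) by (simp add: set_integrable_def)
    have eta_eq: "eta n = integral\<^sup>L lborel (\<lambda>t. indicator {0..} t * tail (Lam n) t)"
      using TS(2) by (simp add: set_lebesgue_integral_def)
    have iG: "integrable lborel (\<lambda>t. indicator {0..} t * G t)"
      by (rule Bochner_Integration.integrable_bound[OF iT]) (use Gmeas Gle G0 tail_nonneg in \<open>auto simp: indicator_def\<close>)
    have iT2: "integrable lborel (\<lambda>t. 2 * (indicator {0..} t * tail (Lam n) t))"
      using iT by simp
    have cb: "\<bar>1 - cos (u * t)\<bar> \<le> 2" for t
      using cos_le_one[of "u*t"] cos_ge_minus_one[of "u*t"] by linarith
    have H0: "0 \<le> (1 - cos (u * t)) * G t" for t using G0[of t] by simp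
    have Hle: "(1 - cos (u * t)) * G t \<le> 2 * tail (Lam n) t" if "t \<ge> 0" for t
      using mult_mono[OF _ Gle[OF that], of "1 - cos (u*t)" 2] cb[of t] G0[of t] by simp
    have iH: "integrable lborel (\<lambda>t. indicator {0..} t * ((1 - cos (u * t)) * G t))"
      by (rule Bochner_Integration.integrable_bound[OF iT2]) (use Gmeas Hle H0 tail_nonneg in \<open>auto simp: indicator_def\<close>)
    have iHa: "integrable lborel (\<lambda>t. indicator {0..a} t * ((1 - cos (u * t)) * G t))"
      by (rule Bochner_Integration.integrable_bound[OF iT2]) (use Gmeas Hle H0 tail_nonneg in \<open>auto simp: indicator_def\<close>)
    have iCa: "integrable lborel (\<lambda>t. indicator {0..a} t * (c1 * (1 - cos (u * t))))"
      using borel_integrable_atLeastAtMost'[of 0 a "\<lambda>t. c1 * (1 - cos (u * t))"]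
      by (simp add: set_integrable_def continuous_intros)
    define F where "F = (\<lambda>t. exp (\<i> * complex_of_real (u * t)) * complex_of_real (G t))"
    have iF: "integrable lborel (\<lambda>t. indicator {0..} t *\<^sub>R F t)"
      by (rule Bochner_Integration.integrable_bound[OF iG]) (use Gmeas G0 in \<open>auto simp: F_def indicator_def norm_mult\<close>)
    have ReI: "Re (set_lebesgue_integral lborel {0..} F)
        = integral\<^sup>L lborel (\<lambda>t. indicator {0..} t * G t) - integral\<^sup>L lborel (\<lambda>t. indicator {0..} t * ((1 - cos (u * t)) * G t))"
    proof -
      have "Re (set_lebesgue_integral lborel {0..} F) = integral\<^sup>L lborel (\<lambda>t. Re (indicator {0..} t *\<^sub>R F t))"
        unfolding set_lebesgue_integral_def by (rule integral_bounded_linear[OF bounded_linear_Re iF, symmetric])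
      also have "\<dots> = integral\<^sup>L lborel (\<lambda>t. indicator {0..} t * G t - indicator {0..} t * ((1 - cos (u * t)) * G t))"
        by (intro Bochner_Integration.integral_cong) (auto simp: F_def Re_exp algebra_simps)
      also have "\<dots> = integral\<^sup>L lborel (\<lambda>t. indicator {0..} t * G t) - integral\<^sup>L lborel (\<lambda>t. indicator {0..} t * ((1 - cos (u * t)) * G t))"
        by (rule Bochner_Integration.integral_diff[OF iG iH])
      finally show ?thesis .
    qed
    have int1: "integral\<^sup>L lborel (\<lambda>t. indicator {0..} t * G t) \<le> eta n"
      unfolding eta_eq by (intro integral_mono iG iT) (use Gle in \<open>auto simp: indicator_def\<close>)
    have u0: "u \<noteq> 0" using u th by auto
    have sinc: "a - sin (u * a) / u \<ge> a * d2"
    proof -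
      define x where "x = \<bar>u\<bar> * a"
      have xy: "y0 \<le> x" using u a0 by (simp add: x_def y0_def mult_right_mono min.coboundedI1)
      have "sin (u * a) / u = a * (sin x / x)"
      proof (cases "u \<ge> 0")
        case True then show ?thesis using a0 u0 by (simp add: x_def field_simps)
      next
        case False then show ?thesis using a0 u0 by (simp add: x_def field_simps)
      qed
      moreover have "d2 \<le> 1 - sin x / x" using sinc_bound(1)[OF y00 xy] by (simp add: d2_def)
      then have "a * d2 \<le> a * (1 - sin x / x)" using a0 by (intro mult_left_mono) auto
      moreover have "a * (1 - sin x / x) = a - a * (sin x / x)" by (simp add: algebra_simps)
      ultimately show ?thesis by linarith
    qed
    have int2: "integral\<^sup>L lborel (\<lambda>t. indicator {0..} t * ((1 - cos (u * t)) * G t)) \<ge> c1 * (a * d2)"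
    proof -
      have "c1 * (a * d2) \<le> c1 * (a - sin (u * a) / u)" using sinc c10 by simp
      also have "\<dots> = c1 * integral\<^sup>L lborel (\<lambda>t. indicator {0..a} t * (1 - cos (u * t)))"
        using cos_integral[OF u0 less_imp_le[OF a0]] by (simp add: set_lebesgue_integral_def)
      also have "\<dots> = integral\<^sup>L lborel (\<lambda>t. indicator {0..a} t * (c1 * (1 - cos (u * t))))"
        by (simp add: ac_simps)
      also have "\<dots> \<le> integral\<^sup>L lborel (\<lambda>t. indicator {0..a} t * ((1 - cos (u * t)) * G t))"
      proof (intro integral_mono iCa iHa)
        fix t :: real
        show "indicator {0..a} t * (c1 * (1 - cos (u * t))) \<le> indicator {0..a} t * ((1 - cos (u * t)) * G t)"
        proof (cases "t \<in> {0..a}")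
          case True
          have "c1 * (1 - cos (u * t)) \<le> G t * (1 - cos (u * t))"
            using Ga[of t] True by (intro mult_right_mono) auto
          then show ?thesis using True by (simp add: mult.commute)
        qed simp
      qed
      also have "\<dots> \<le> integral\<^sup>L lborel (\<lambda>t. indicator {0..} t * ((1 - cos (u * t)) * G t))"
        by (intro integral_mono iHa iH) (use H0 in \<open>auto simp: indicator_def\<close>)
      finally show ?thesis .
    qed
    have m1: "mm n \<ge> 1" unfolding mm_def using mean_lower p_prob p_mean Nn(1) by auto
    have m2: "mm n \<le> 1 + L / gam n" unfolding mm_def
      using mean_upper[of "p n" n "gam n" L] p_prob p_mean Nn(1) gam_pos L by auto
    define lm where "lm = lam n * mm n"
    have "lam n * 1 \<le> lam n * mm n" using m1 Nn(2) C1_lam(2) by (intro mult_left_mono) auto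
    then have lm1: "lm \<ge> lam0 / 2" using Nn(2) unfolding lm_def by linarith
    have eta0': "eta n \<ge> 0" using Nn(3) C1_eta(2) by simp
    define J1 where "J1 = integral\<^sup>L lborel (\<lambda>t. indicator {0..} t * G t)"
    define J2 where "J2 = integral\<^sup>L lborel (\<lambda>t. indicator {0..} t * ((1 - cos (u * t)) * G t))"
    have "lm * J1 \<le> lm * eta n" using int1 lm1 C1_lam(2) unfolding J1_def by (intro mult_left_mono) auto
    also have "\<dots> \<le> lam n * eta n * (1 + L / gam n)"
    proof -
      have "mm n * eta n \<le> (1 + L / gam n) * eta n" using m2 eta0' by (rule mult_right_mono)
      then have "lam n * (mm n * eta n) \<le> lam n * ((1 + L / gam n) * eta n)"
        using Nn(2) C1_lam(2) by (intro mult_left_mono) auto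
      then show ?thesis unfolding lm_def by (simp add: ac_simps)
    qed
    finally have b1: "lm * J1 < 1 + eps" using Nn(6) by simp
    have b2: "lm * J2 \<ge> D"
    proof -
      have "D \<le> lm * (c1 * (a * d2))" unfolding D_def using lm1 c10 a0 d20
        by (intro mult_right_mono) auto
      also have "\<dots> \<le> lm * J2" unfolding J2_def using int2 lm1 C1_lam(2) by (intro mult_left_mono) auto
      finally show ?thesis .
    qed
    have "Re (1 - complex_of_real lm * set_lebesgue_integral lborel {0..} F) = 1 - lm * (J1 - J2)"
      using ReI by (simp add: J1_def J2_def)
    also have "\<dots> \<ge> eps" using b1 b2 by (simp add: eps_def algebra_simps)
    finally have "eps \<le> cmod (1 - complex_of_real lm * set_lebesgue_integral lborel {0..} F)"
      using complex_Re_le_cmod by (meson order_trans)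
    then show "eps \<le> cmod (1 - complex_of_real (lam n * mm n) *
              set_lebesgue_integral lborel {0..}
                (\<lambda>t. exp (\<i> * complex_of_real (u * t)) *
                     complex_of_real (exp (- \<beta> * t / gam n) * tail (Lam n) t)))"
      by (simp add: lm_def F_def G_def)
  qed
qed

end
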